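(* Let $n\ge 3$, $0<m<\frac{n-2}{n}$, $\rho>0$, and let $\alpha,\beta$ satisfy $\alpha=\frac{2\beta+\rho}{1-m}$, $\beta>\frac{m\rho}{n-2-mn}$, and $\alpha>n\beta$. Let $v$ be a radially symmetric solution of $$\frac{n-1}{m}\Delta v^m+\alpha v+\beta x\cdot\nabla v=0,\quad v>0,\quad\text{in }\mathbb{R}^n,$$ let $w(r)=r^2v(r)^{1-m}$ and $w_\infty=\frac{2(n-1)(n(1-m)-2)}{(1-m)(\alpha(1-m)-2\beta)}$. Then there exists a constant $\varepsilon\in(0,\min(1,w_\infty/2))$ such that for every $R_0>1$ there exists $r'>R_0$ with $w(r')\ge\varepsilon$.
   Context: $v(r)$ denotes the value of the radially symmetric function $v$ at any point with $|x|=r$. *)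

theory Defs
  imports "HOL-Analysis.Analysis"
begin

definition pd :: "('a::euclidean_space \<Rightarrow> real) \<Rightarrow> 'a \<Rightarrow> 'a \<Rightarrow> real" where
  "pd f i x = deriv (\<lambda>t. f (x + t *\<^sub>R i)) 0"

definition laplacian :: "('a::euclidean_space \<Rightarrow> real) \<Rightarrow> 'a \<Rightarrow> real" where
  "laplacian f x = (\<Sum>i\<in>Basis. pd (pd f i) i x)"

definition grad :: "('a::euclidean_space \<Rightarrow> real) \<Rightarrow> 'a \<Rightarrow> 'a" where
  "grad f x = (\<Sum>i\<in>Basis. pd f i x *\<^sub>R i)"

definition C2 :: "('a::euclidean_space \<Rightarrow> real) \<Rightarrow> bool" where
  "C2 f \<longleftrightarrow> (\<forall>x. f differentiable at x) \<and>
     (\<forall>i\<in>Basis. \<forall>x. pd f i differentiable at x) \<and>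
     (\<forall>i\<in>Basis. \<forall>j\<in>Basis. continuous_on UNIV (pd (pd f i) j))"

definition radially_symmetric :: "('a::euclidean_space \<Rightarrow> real) \<Rightarrow> bool" where
  "radially_symmetric f \<longleftrightarrow> (\<forall>x y. norm x = norm y \<longrightarrow> f x = f y)"

definition radval :: "('a::euclidean_space \<Rightarrow> real) \<Rightarrow> real \<Rightarrow> real" where
  "radval f r = f (r *\<^sub>R (SOME e. e \<in> (Basis::'a set)))"

end

theory Submission
  imports Defs
begin


lemma line_deriv:
  fixes f :: "'a::euclidean_space \<Rightarrow> real"
  shows "pd f e (r *\<^sub>R e) = deriv (\<lambda>s. f (s *\<^sub>R e)) r"
proof -
  have "pd f e (r *\<^sub>R e) = deriv ((\<lambda>s. f (s *\<^sub>R e)) \<circ> (\<lambda>t. r + t)) 0"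
    unfolding pd_def by (simp add: o_def scaleR_add_left)
  also have "\<dots> = deriv (\<lambda>s. f (s *\<^sub>R e)) r" by (rule deriv_shift_0[symmetric])
  finally show ?thesis .
qed

lemma line_differentiable:
  fixes f :: "'a::euclidean_space \<Rightarrow> real"
  assumes "f differentiable at (r *\<^sub>R e)"
  shows "((\<lambda>s. f (s *\<^sub>R e)) has_real_derivative deriv (\<lambda>s. f (s *\<^sub>R e)) r) (at r)"
proof -
  have "(\<lambda>s. s *\<^sub>R e) differentiable at r"
    by (auto intro!: derivative_intros)
  then have "(f \<circ> (\<lambda>s. s *\<^sub>R e)) differentiable at r"
    using differentiable_chain_at assms by blast
  then show ?thesis unfolding DERIV_deriv_iff_real_differentiable by (simp add: o_def)
qed

lemma off_axis_deriv:
  fixes h hd :: "real \<Rightarrow> real"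
  assumes hder: "\<forall>r. (h has_real_derivative hd r) (at r)"
    and hdc: "continuous_on UNIV hd"
    and r: "r > 0"
  shows "deriv (\<lambda>t. deriv (\<lambda>s. h (sqrt (r^2 + (t+s)^2))) 0) 0 = hd r / r"
proof -
  define \<rho> where "\<rho> t = sqrt (r^2 + t^2)" for t
  have rpos: "\<rho> t > 0" for t unfolding \<rho>_def using r by (simp add: add_pos_nonneg)
  have rhoder: "(\<rho> has_real_derivative t / \<rho> t) (at t)" for t
  proof -
    have "r^2 + t^2 > 0" using r by (simp add: add_pos_nonneg)
    then show ?thesis unfolding \<rho>_def
      by (auto intro!: derivative_eq_intros simp: field_simps power2_eq_square)
  qed
  have phider: "((\<lambda>t. h (\<rho> t)) has_real_derivative hd (\<rho> t) * (t / \<rho> t)) (at t)" for t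
    using DERIV_chain2[OF hder[rule_format] rhoder] .
  have inner: "deriv (\<lambda>s. h (sqrt (r^2 + (t+s)^2))) 0 = hd (\<rho> t) * t / \<rho> t" for t
  proof -
    have "deriv (\<lambda>s. h (sqrt (r^2 + (t+s)^2))) 0 = deriv ((\<lambda>t. h (\<rho> t)) \<circ> (\<lambda>s. t + s)) 0"
      unfolding \<rho>_def by (simp add: o_def)
    also have "\<dots> = deriv (\<lambda>t. h (\<rho> t)) t" by (rule deriv_shift_0[symmetric])
    also have "\<dots> = hd (\<rho> t) * (t / \<rho> t)" by (rule DERIV_imp_deriv[OF phider])
    finally show ?thesis by simp
  qed
  define G where "G t = hd (\<rho> t) / \<rho> t" for t
  have Gc: "isCont G 0"
  proof -
    have "isCont \<rho> 0" using rhoder DERIV_isCont by blast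
    moreover have "isCont hd (\<rho> 0)" using hdc by (simp add: continuous_on_eq_continuous_at)
    ultimately have "isCont (\<lambda>t. hd (\<rho> t)) 0" by (rule isCont_o2)
    then show ?thesis unfolding G_def using \<open>isCont \<rho> 0\<close> rpos[of 0]
      by (intro isCont_divide) auto
  qed
  have "((\<lambda>t. hd (\<rho> t) * t / \<rho> t) has_real_derivative G 0) (at 0)"
    unfolding CARAT_DERIV
    by (rule exI[of _ G]) (auto simp: G_def Gc)
  moreover have "G 0 = hd r / r" unfolding G_def \<rho>_def using r by simp
  ultimately have "deriv (\<lambda>t. hd (\<rho> t) * t / \<rho> t) 0 = hd r / r" using DERIV_imp_deriv by metis
  then show ?thesis unfolding inner .
qed

lemma reduce:
  fixes v :: "'a::euclidean_space \<Rightarrow> real" and m \<alpha> \<beta> :: real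
  assumes m_pos: "0 < m"
    and v_pos: "\<forall>x. v x > 0"
    and v_rad: "radially_symmetric v"
    and v_C2: "C2 v"
    and vm_C2: "C2 (\<lambda>x. v x powr m)"
    and eqn: "\<forall>x. (real DIM('a) - 1) / m * laplacian (\<lambda>y. v y powr m) x + \<alpha> * v x
                    + \<beta> * (x \<bullet> grad v x) = 0"
  shows "\<forall>r. radval v r > 0"
    and "\<forall>r. (radval v has_real_derivative deriv (radval v) r) (at r)"
    and "\<forall>r. ((\<lambda>r. radval v r powr m) has_real_derivative deriv (\<lambda>r. radval v r powr m) r) (at r)"
    and "\<forall>r. (deriv (\<lambda>r. radval v r powr m) has_real_derivative deriv (deriv (\<lambda>r. radval v r powr m)) r) (at r)"
    and "\<forall>r>0. (real DIM('a) - 1)/m * (deriv (deriv (\<lambda>r. radval v r powr m)) r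
            + (real DIM('a) - 1) * deriv (\<lambda>r. radval v r powr m) r / r)
           + \<alpha> * radval v r + \<beta> * (r * deriv (radval v) r) = 0"
proof -
  define e :: 'a where "e = (SOME e. e \<in> Basis)"
  have eB: "e \<in> Basis" unfolding e_def by (rule someI_ex) (use nonempty_Basis in blast)
  have ne: "norm e = 1" using eB by simp
  define g where "g = radval v"
  define u where "u = (\<lambda>y. v y powr m)"
  define h where "h = (\<lambda>r. radval v r powr m)"
  have gdef: "g r = v (r *\<^sub>R e)" for r unfolding g_def radval_def e_def ..
  have hdef: "h r = u (r *\<^sub>R e)" for r unfolding h_def u_def radval_def e_def ..
  have vrad: "v y = g (norm y)" for y
  proof -
    have "norm (norm y *\<^sub>R e) = norm y" using ne by simp
    then show ?thesis using v_rad unfolding radially_symmetric_def gdef by metis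
  qed
  have urad: "u y = h (norm y)" for y unfolding u_def h_def using vrad[of y] g_def by simp
  have vd: "\<forall>x. v differentiable at x" using v_C2 unfolding C2_def by blast
  have ud: "\<forall>x. u differentiable at x" using vm_C2 unfolding C2_def u_def by blast
  have pud: "\<forall>x. pd u e differentiable at x" using vm_C2 eB unfolding C2_def u_def by blast
  show gp: "\<forall>r. radval v r > 0" using v_pos unfolding radval_def by simp
  have gder: "(g has_real_derivative deriv g r) (at r)" for r
    using line_differentiable[of v r e] vd unfolding gdef[abs_def] by simp
  then show "\<forall>r. (radval v has_real_derivative deriv (radval v) r) (at r)" unfolding g_def by simp
  have hder: "(h has_real_derivative deriv h r) (at r)" for r
    using line_differentiable[of u r e] ud unfolding hdef[abs_def] by simp
  then show "\<forall>r. ((\<lambda>r. radval v r powr m) has_real_derivative deriv (\<lambda>r. radval v r powr m) r) (at r)"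
    unfolding h_def by simp
  have hd_line: "deriv h = (\<lambda>r. pd u e (r *\<^sub>R e))"
    using line_deriv[of u e] unfolding hdef[abs_def] by simp
  have gd_line: "deriv g r = pd v e (r *\<^sub>R e)" for r
    using line_deriv[of v e r] unfolding gdef[abs_def] by simp
  have hdder: "(deriv h has_real_derivative deriv (deriv h) r) (at r)" for r
    unfolding hd_line using line_differentiable[of "pd u e" r e] pud by simp
  then show "\<forall>r. (deriv (\<lambda>r. radval v r powr m) has_real_derivative deriv (deriv (\<lambda>r. radval v r powr m)) r) (at r)"
    unfolding h_def by simp
  have hdc: "continuous_on UNIV (deriv h)"
    using hdder by (meson DERIV_isCont continuous_at_imp_continuous_on)
  show "\<forall>r>0. (real DIM('a) - 1)/m * (deriv (deriv (\<lambda>r. radval v r powr m)) r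
            + (real DIM('a) - 1) * deriv (\<lambda>r. radval v r powr m) r / r)
           + \<alpha> * radval v r + \<beta> * (r * deriv (radval v) r) = 0"
  proof (intro allI impI)
    fix r :: real assume r: "r > 0"
    define x where "x = r *\<^sub>R e"
    have lap_e: "pd (pd u e) e x = deriv (deriv h) r"
      unfolding x_def line_deriv hd_line ..
    have lap_i: "pd (pd u i) i x = deriv h r / r" if i: "i \<in> Basis" "i \<noteq> e" for i
    proof -
      have ie: "i \<bullet> e = 0" using i eB by (simp add: inner_Basis)
      have nrm: "norm (r *\<^sub>R e + t *\<^sub>R i) = sqrt (r^2 + t^2)" for t
      proof -
        have "(r *\<^sub>R e + t *\<^sub>R i) \<bullet> (r *\<^sub>R e + t *\<^sub>R i) = r^2 + t^2"
          using ie eB i by (simp add: inner_add_left inner_add_right inner_commute power2_eq_square)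
        then show ?thesis by (simp add: norm_eq_sqrt_inner)
      qed
      have "pd u i (x + t *\<^sub>R i) = deriv (\<lambda>s. h (sqrt (r^2 + (t+s)^2))) 0" for t
      proof -
        have "(\<lambda>s. u (x + t *\<^sub>R i + s *\<^sub>R i)) = (\<lambda>s. h (sqrt (r^2 + (t+s)^2)))"
        proof
          fix s
          have "x + t *\<^sub>R i + s *\<^sub>R i = r *\<^sub>R e + (t+s) *\<^sub>R i"
            unfolding x_def by (simp add: scaleR_add_left algebra_simps)
          then show "u (x + t *\<^sub>R i + s *\<^sub>R i) = h (sqrt (r^2 + (t+s)^2))"
            using urad nrm by simp
        qed
        then show ?thesis unfolding pd_def by simp
      qed
      then have "pd (pd u i) i x = deriv (\<lambda>t. deriv (\<lambda>s. h (sqrt (r^2 + (t+s)^2))) 0) 0"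
        unfolding pd_def[of "pd u i"] by simp
      also have "\<dots> = deriv h r / r"
        by (rule off_axis_deriv[OF _ hdc r]) (use hder in blast)
      finally show ?thesis .
    qed
    have lap: "laplacian u x = deriv (deriv h) r + (real DIM('a) - 1) * deriv h r / r"
    proof -
      have "laplacian u x = pd (pd u e) e x + (\<Sum>i\<in>Basis - {e}. pd (pd u i) i x)"
        unfolding laplacian_def using eB by (simp add: sum.remove)
      also have "(\<Sum>i\<in>Basis - {e}. pd (pd u i) i x) = (\<Sum>i\<in>Basis - {e}. deriv h r / r)"
        using lap_i by (intro sum.cong) auto
      also have "\<dots> = (real DIM('a) - 1) * deriv h r / r"
        using eB by (simp add: card_Diff_singleton of_nat_diff)
      finally show ?thesis unfolding lap_e by simp
    qed
    have grd: "x \<bullet> grad v x = r * deriv g r"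
    proof -
      have "x \<bullet> grad v x = (\<Sum>i\<in>Basis. pd v i x * (x \<bullet> i))"
        unfolding grad_def by (simp add: inner_sum_right)
      also have "\<dots> = (\<Sum>i\<in>Basis. if i = e then pd v e x * r else 0)"
        unfolding x_def using eB by (intro sum.cong) (auto simp: inner_Basis)
      also have "\<dots> = pd v e x * r" using eB by simp
      finally show ?thesis unfolding gd_line x_def by simp
    qed
    have "(real DIM('a) - 1) / m * laplacian u x + \<alpha> * v x + \<beta> * (x \<bullet> grad v x) = 0"
      using eqn unfolding u_def by blast
    then have fin: "(real DIM('a) - 1)/m * (deriv (deriv h) r + (real DIM('a) - 1) * deriv h r / r)
           + \<alpha> * g r + \<beta> * (r * deriv g r) = 0"
      unfolding lap grd using gdef[of r] x_def by simp
    then show "(real DIM('a) - 1)/m * (deriv (deriv (\<lambda>r. radval v r powr m)) r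
            + (real DIM('a) - 1) * deriv (\<lambda>r. radval v r powr m) r / r)
           + \<alpha> * radval v r + \<beta> * (r * deriv (radval v) r) = 0"
      unfolding h_def g_def .
  qed
qed



lemma ode_partA:
  fixes g h gd hd hdd :: "real \<Rightarrow> real" and m \<alpha> \<beta> n :: real
  assumes m_pos: "0 < m" and m1: "m < 1" and bpos: "\<beta> > 0" and apos: "\<alpha> > 0"
   and key: "m * \<alpha> < (n - 2) * \<beta>"
   and gpos: "\<forall>r. g r > 0"
   and hdef: "\<forall>r. h r = g r powr m"
   and gder: "\<forall>r. (g has_real_derivative gd r) (at r)"
   and hder: "\<forall>r. (h has_real_derivative hd r) (at r)"
   and hdder: "\<forall>r. (hd has_real_derivative hdd r) (at r)"
   and ode: "\<forall>r>0. (n-1)/m*(hdd r + (n-1)*hd r/r) + \<alpha>*g r + \<beta>*(r*gd r) = 0"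
  shows "\<forall>r>0. \<alpha> * g r + \<beta> * (r * gd r) > 0"
proof -
  have hd_eq: "hd r = m * g r powr (m-1) * gd r" for r
  proof -
    have "((\<lambda>r. g r powr m) has_real_derivative m * g r powr (m - of_nat 1) * gd r) (at r)"
      by (rule DERIV_fun_powr) (use gder gpos in auto)
    moreover have "(\<lambda>r. g r powr m) = h" using hdef by auto
    ultimately show ?thesis using hder DERIV_unique by (metis of_nat_1)
  qed
  have inv1: "g r powr (1-m) * g r powr (m-1) = 1" for r
    using gpos[rule_format, of r] by (simp add: powr_add[symmetric])
  have gd_eq: "gd r = g r powr (1-m) * hd r / m" for r
    using hd_eq[of r] inv1[of r] m_pos by (simp add: field_simps)
  define gdd where "gdd r = ((1-m) * g r powr (1 - m - 1) * gd r * hd r + g r powr (1-m) * hdd r) / m" for r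
  have gdder: "(gd has_real_derivative gdd r) (at r)" for r
  proof -
    have "((\<lambda>r. g r powr (1-m) * hd r / m) has_real_derivative gdd r) (at r)"
      unfolding gdd_def
      using m_pos by (auto intro!: derivative_eq_intros DERIV_fun_powr[where g=g] gder[rule_format] hdder[rule_format] gpos[rule_format])
    moreover have "(\<lambda>r. g r powr (1-m) * hd r / m) = gd" using gd_eq by auto
    ultimately show ?thesis by simp
  qed
  define Q where "Q r = \<alpha> * g r + \<beta> * (r * gd r)" for r
  have Qder: "(Q has_real_derivative \<alpha> * gd r + \<beta> * (gd r + r * gdd r)) (at r)" for r
    unfolding Q_def
    by (auto intro!: derivative_eq_intros gder[rule_format] gdder)
  have Qcont: "continuous_on A Q" for A
    using Qder by (meson DERIV_isCont continuous_at_imp_continuous_on)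
  have Q0: "Q 0 > 0" using gpos apos by (simp add: Q_def)
  have Qpos_deriv: "\<alpha> * gd r + \<beta> * (gd r + r * gdd r) > 0" if r: "r > 0" "Q r = 0" for r
  proof -
    define G where "G = g r"
    have G: "G > 0" using gpos G_def by auto
    have gdr: "gd r = - \<alpha> * G / (\<beta> * r)" using r bpos unfolding Q_def G_def by (simp add: field_simps)
    have gdneg: "gd r < 0" using gdr G apos bpos r by (simp add: divide_neg_pos)
    have hddr: "hdd r = -(n-1) * hd r / r"
    proof -
      have n2: "n > 2" using key m_pos apos bpos
        by (smt (verit) mult_pos_pos mult_le_0_iff)
      have "(n-1)/m * (hdd r + (n-1)*hd r/r) = 0"
        using ode[rule_format, OF r(1)] r(2) unfolding Q_def by linarith
      then have "hdd r + (n-1)*hd r/r = 0" using n2 m_pos by simp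
      then show ?thesis using r(1) by (simp add: field_simps)
    qed
    have p1: "G powr (1 - m - 1) * G powr (m-1) = 1 / G"
    proof -
      have "G powr (1 - m - 1) * G powr (m-1) = G powr ((1-m-1)+(m-1))" by (rule powr_add[symmetric])
      also have "\<dots> = G powr (-1)" by simp
      also have "\<dots> = 1 / G" using G by (simp add: powr_minus divide_inverse)
      finally show ?thesis .
    qed
    have gddr: "gdd r = (1-m) * gd r ^ 2 / G - (n-1) * gd r / r"
    proof -
      have t0: "gdd r = ((1-m) * (g r powr (1-m-1) * gd r * hd r) + g r powr (1-m) * hdd r)/m"
        by (simp add: gdd_def mult.assoc)
      have t1: "g r powr (1-m-1) * gd r * hd r = m * gd r ^ 2 / G"
      proof -
        have "g r powr (1-m-1) * gd r * hd r = m * gd r ^ 2 * (G powr (1 - m - 1) * G powr (m-1))"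
          unfolding hd_eq G_def by (simp add: power2_eq_square)
        then show ?thesis using p1 by simp
      qed
      have t2: "g r powr (1-m) * hdd r = -(n-1) * m * gd r / r"
      proof -
        have "g r powr (1-m) * hdd r = -(n-1) * m * gd r / r * (G powr (1-m) * G powr (m-1))"
          unfolding hddr hd_eq G_def using r(1) by (simp add: field_simps)
        then show ?thesis using inv1[of r] unfolding G_def by simp
      qed
      show ?thesis unfolding t0 t1 t2 using m_pos r(1) G by (simp add: field_simps)
    qed
    have "\<alpha> * gd r + \<beta> * (gd r + r * gdd r) = gd r * (m * \<alpha> - (n - 2) * \<beta>)"
      unfolding gddr gdr using G r bpos by (simp add: field_simps power2_eq_square)
    also have "\<dots> > 0" using gdneg key by (simp add: mult_neg_neg)
    finally show ?thesis .
  qed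
  show ?thesis
  proof (rule ccontr)
    assume "\<not> ?thesis"
    then obtain R where R: "R > 0" "Q R \<le> 0" unfolding Q_def by auto
    define Z where "Z = {x \<in> {0..R}. Q x = 0}"
    have Zne: "Z \<noteq> {}"
      using IVT2'[of Q R 0 0, OF R(2) _ _ Qcont] Q0 R unfolding Z_def by auto
    have Zc: "closed Z" unfolding Z_def
      by (rule continuous_closed_preimage_constant[OF Qcont closed_atLeastAtMost])
    have Zb: "bdd_below Z" unfolding Z_def by (auto intro: bdd_belowI[of _ 0])
    define r1 where "r1 = Inf Z"
    have r1Z: "r1 \<in> Z" unfolding r1_def
      using closed_contains_Inf[OF Zne Zb Zc] by blast
    have r1pos: "r1 > 0" using r1Z Q0 unfolding Z_def by (cases "r1 = 0") auto
    have Qr1: "Q r1 = 0" using r1Z unfolding Z_def by auto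
    have Qbefore: "Q t > 0" if t: "0 \<le> t" "t < r1" for t
    proof (rule ccontr)
      assume "\<not> Q t > 0"
      then have "Q t \<le> 0" by simp
      then obtain x where x: "0 \<le> x" "x \<le> t" "Q x = 0"
        using IVT2'[of Q t 0 0, OF _ _ _ Qcont] Q0 t by auto
      have "x \<in> Z" using x t r1Z unfolding Z_def by auto
      then have "r1 \<le> x" unfolding r1_def using Zb by (simp add: cInf_lower)
      then show False using x t by simp
    qed
    obtain d where d: "d > 0" "\<forall>h>0. h < d \<longrightarrow> Q (r1 - h) < Q r1"
      using DERIV_pos_inc_left[OF Qder[of r1] Qpos_deriv[OF r1pos Qr1]] by blast
    define hh where "hh = min (d/2) (r1/2)"
    have "Q (r1 - hh) < 0" using d(2)[rule_format, of hh] d r1pos Qr1 unfolding hh_def by auto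
    moreover have "Q (r1 - hh) > 0" using Qbefore[of "r1 - hh"] d r1pos unfolding hh_def by auto
    ultimately show False by simp
  qed
qed



lemma ode_partB:
  fixes g h gd hd hdd :: "real \<Rightarrow> real" and m \<alpha> \<beta> n :: real and N :: nat
  assumes nN: "n = real N" and N3: "N \<ge> 3"
   and m_pos: "0 < m" and m1: "m < 1" and bpos: "\<beta> > 0" and apos: "\<alpha> > 0"
   and key: "m * \<alpha> < (n - 2) * \<beta>" and anb: "\<alpha> > n * \<beta>"
   and gpos: "\<forall>r. g r > 0"
   and hdef: "\<forall>r. h r = g r powr m"
   and gder: "\<forall>r. (g has_real_derivative gd r) (at r)"
   and hder: "\<forall>r. (h has_real_derivative hd r) (at r)"
   and hdder: "\<forall>r. (hd has_real_derivative hdd r) (at r)"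
   and ode: "\<forall>r>0. (n-1)/m*(hdd r + (n-1)*hd r/r) + \<alpha>*g r + \<beta>*(r*gd r) = 0"
   and Qpos: "\<forall>r>0. \<alpha> * g r + \<beta> * (r * gd r) > 0"
  shows "\<exists>\<epsilon>>0. \<forall>R0. \<exists>r>R0. \<epsilon> \<le> r^2 * g r powr (1-m)"
proof -
  have hd_eq: "hd r = m * g r powr (m-1) * gd r" for r
  proof -
    have "((\<lambda>r. g r powr m) has_real_derivative m * g r powr (m - of_nat 1) * gd r) (at r)"
      by (rule DERIV_fun_powr) (use gder gpos in auto)
    moreover have "(\<lambda>r. g r powr m) = h" using hdef by auto
    ultimately show ?thesis using hder DERIV_unique by (metis of_nat_1)
  qed
  have gr: "g r > 0" for r using gpos by auto
  have gm1: "g r powr (m-1) = h r / g r" for r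
    using gr[of r] hdef by (simp add: powr_diff)
  have g1m: "g r powr (1-m) = g r / h r" for r
    using gr[of r] hdef by (simp add: powr_diff)
  have hpos: "h r > 0" for r using hdef gr[of r] by simp
  have anb': "\<alpha> - n * \<beta> > 0" using anb by simp
  define c where "c = -1/(\<alpha> - n*\<beta>)"
  define L where "L r = (n-1)/m * (r^(N-1) * hd r) + \<beta> * (r^N * g r)" for r
  define Ld where "Ld r = (n-1)/m * (real (N-1) * r^(N-1-1) * hd r + r^(N-1) * hdd r)
        + \<beta> * (real N * r^(N-1) * g r + r^N * gd r)" for r
  define K where "K r = c * L r" for r
  define Kd where "Kd r = c * Ld r" for r
  have Lder: "(L has_real_derivative Ld r) (at r)" for r
    unfolding L_def Ld_def using m_pos
    by (auto intro!: derivative_eq_intros gder[rule_format] hder[rule_format] hdder[rule_format]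
          simp: field_simps)
  have Kder: "(K has_real_derivative Kd r) (at r)" for r
    unfolding K_def[abs_def] Kd_def by (rule DERIV_cmult[OF Lder])
  have Kd_eq: "Kd r = r^(N-1) * g r" if r: "r > 0" for r
  proof -
    define P where "P = r^(N-2)"
    obtain k where k: "N = k + 3" using N3 by (metis add.commute le_add_diff_inverse)
    have P1: "r^(N-1) = r * P" unfolding P_def k by (simp add: numeral_eq_Suc)
    have P2: "r^N = r * r * P" unfolding P_def k by (simp add: numeral_eq_Suc)
    have P0: "r^(N-1-1) = P" unfolding P_def k by (simp add: numeral_eq_Suc)
    have N1: "real (N-1) = n - 1" using nN N3 by auto
    have o: "(n-1)/m * hdd r = -((n-1)/m*((n-1)*hd r/r)) - \<alpha>*g r - \<beta>*(r*gd r)"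
      using ode[rule_format, OF r] by (simp add: algebra_simps)
    have "Kd r = -((n-1)/m * (real (N-1) * P * hd r) + r * P * ((n-1)/m * hdd r)
        + \<beta> * (real N * r * P * g r + r * r * P * gd r))/(\<alpha> - n*\<beta>)"
      unfolding Kd_def Ld_def c_def P0 P1 P2 using anb' m_pos by (simp add: field_simps)
    also have "\<dots> = r * P * g r"
      unfolding o N1 using r m_pos anb' nN by (simp add: field_simps)
    finally show ?thesis using P1 by simp
  qed
  have K0: "K 0 = 0" unfolding K_def L_def using N3 by (simp add: power_0_left)
  have Kpos: "K r > 0" if r: "r > 0" for r
  proof -
    obtain z where z: "0 < z" "z < r" "K r - K 0 = (r - 0) * Kd z"
      using MVT2[of 0 r K Kd] Kder r by blast
    have "Kd z > 0" using Kd_eq[OF z(1)] gpos z(1) by simp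
    then show ?thesis using z r K0 by simp
  qed
  define w where "w r = r^2 * g r powr (1-m)" for r
  define a where "a r = r * gd r / g r" for r
  define D where "D r = r^(N-2) * h r" for r
  define Dd where "Dd r = real (N-2) * r^(N-2-1) * h r + r^(N-2) * hd r" for r
  define z where "z r = K r / D r" for r
  define zd where "zd r = (Kd r * D r - K r * Dd r) / (D r * D r)" for r
  have Dpos: "D r > 0" if "r > 0" for r using that hpos unfolding D_def by simp
  have Dder: "(D has_real_derivative Dd r) (at r)" for r
    unfolding D_def[abs_def] Dd_def
    by (auto intro!: derivative_eq_intros hder[rule_format] simp: algebra_simps)
  have zder: "(z has_real_derivative zd r) (at r)" if r: "r > 0" for r
    unfolding z_def[abs_def] zd_def
    by (rule DERIV_divide[OF Kder Dder]) (use Dpos[OF r] in simp)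
  have Nn: "real (N-2) = n - 2" "real (N - 1) = n - 1" using N3 nN by auto
  have a_gt: "a r > - \<alpha> / \<beta>" if r: "r > 0" for r
  proof -
    have "\<alpha> * g r + \<beta> * (r * gd r) > 0" using Qpos r by auto
    then have "\<beta> * (r * gd r) > - \<alpha> * g r" by simp
    then have "r * gd r / g r > - \<alpha> * g r / \<beta> / g r" using bpos gr[of r]
      by (simp add: field_simps)
    then show ?thesis unfolding a_def using gr[of r] by simp
  qed
  have zpos: "z r > 0" if r: "r > 0" for r
    unfolding z_def using Kpos[OF r] Dpos[OF r] by simp
  have ident: "(\<alpha> - n*\<beta>) * z r = -(n-1) * a r - \<beta> * w r" if r: "r > 0" for r
  proof -
    obtain k where k: "N = k + 3" using N3 by (metis add.commute le_add_diff_inverse)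
    define P where "P = r^(k+1)"
    have P: "r^(N-2) = P" "r^(N-1) = r * P" "r^N = r * r * P" unfolding P_def k
      by (simp_all add: numeral_eq_Suc)
    have "(\<alpha> - n*\<beta>) * z r = -L r / D r" unfolding z_def K_def c_def using anb' by simp
    also have "\<dots> = -((n-1)/m * (r * P * (m * (h r / g r) * gd r)) + \<beta> * (r * r * P * g r)) / (P * h r)"
      unfolding L_def D_def P hd_eq gm1 by simp
    also have "\<dots> = -(n-1) * a r - \<beta> * w r"
      unfolding a_def w_def g1m using r m_pos hpos[of r] gr[of r]
      by (simp add: field_simps power2_eq_square P_def)
    finally show ?thesis .
  qed
  have zd_eq: "zd r = (w r + z r * (2 - n - m * a r)) / r" if r: "r > 0" for r
  proof -
    obtain k where k: "N = k + 3" using N3 by (metis add.commute le_add_diff_inverse)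
    define P where "P = r^k"
    have P: "r^(N-2) = r * P" "r^(N-1) = r * r * P" "r^(N-2-1) = P" unfolding P_def k
      by (simp_all add: numeral_eq_Suc)
    have Ppos: "P > 0" using r unfolding P_def by simp
    have "zd r = (r * r * P * g r * (r * P * h r) - K r * ((n-2) * P * h r + r * P * (m * (h r / g r) * gd r)))
                 / ((r * P * h r) * (r * P * h r))"
      unfolding zd_def Kd_eq[OF r] D_def Dd_def P Nn hd_eq gm1 by simp
    also have "\<dots> = (w r + z r * (2 - n - m * a r)) / r"
      unfolding w_def a_def z_def D_def P g1m using r Ppos hpos[of r] gr[of r] m_pos
      by (simp add: field_simps power2_eq_square)
    finally show ?thesis .
  qed
  define wd where "wd r = r * g r powr (1-m) * (2 + (1-m) * a r)" for r
  have wder: "(w has_real_derivative wd r) (at r)" if r: "r > 0" for r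
  proof -
    have pm: "g r powr (1 - m - 1) = g r powr (1-m) / g r"
    proof -
      have "g r powr (1 - m - 1) = g r powr (1-m) / g r powr 1" by (rule powr_diff)
      also have "g r powr 1 = g r" using gr[of r] by simp
      finally show ?thesis .
    qed
    have "(w has_real_derivative (2 * r * g r powr (1-m) + r^2 * ((1-m) * g r powr (1 - m - 1) * gd r))) (at r)"
      unfolding w_def[abs_def]
      by (auto intro!: derivative_eq_intros DERIV_fun_powr[where g=g] gder[rule_format] gr simp: algebra_simps)
    moreover have "2 * r * g r powr (1-m) + r^2 * ((1-m) * g r powr (1 - m - 1) * gd r) = wd r"
      unfolding wd_def a_def pm using gr[of r] by (simp add: field_simps power2_eq_square)
    ultimately show ?thesis by simp
  qed
  have wpos: "w r > 0" if "r > 0" for r unfolding w_def using that gr[of r] by simp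
  have n1: "n - 1 > 0" using N3 nN by simp
  show ?thesis
  proof (rule ccontr)
    assume H: "\<not> ?thesis"
    have Hw: "eventually (\<lambda>r. w r < e) at_top" if e: "e > 0" for e
    proof -
      obtain R0 where "\<forall>r>R0. \<not> e \<le> w r" using H e unfolding w_def by auto
      then show ?thesis unfolding eventually_at_top_dense by (auto intro!: exI[of _ R0])
    qed
    define \<delta> where "\<delta> = n - 2 - m * \<alpha> / \<beta>"
    have dpos: "\<delta> > 0" unfolding \<delta>_def using key bpos by (simp add: field_simps)
    define \<epsilon> where "\<epsilon> = ((n-1)/(1-m)) / (\<beta> + 2*(\<alpha>-n*\<beta>)/\<delta>)"
    have den: "\<beta> + 2*(\<alpha>-n*\<beta>)/\<delta> > 0" using bpos anb' dpos by (simp add: add_pos_pos)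
    have epos: "\<epsilon> > 0" unfolding \<epsilon>_def using n1 m1 den by simp
    have eps_eq: "\<beta> * \<epsilon> + (\<alpha>-n*\<beta>) * (2*\<epsilon>/\<delta>) = (n-1)/(1-m)"
    proof -
      have "\<beta> * \<epsilon> + (\<alpha>-n*\<beta>) * (2*\<epsilon>/\<delta>) = \<epsilon> * (\<beta> + 2*(\<alpha>-n*\<beta>)/\<delta>)"
        by (simp add: algebra_simps)
      also have "\<dots> = (n-1)/(1-m)" unfolding \<epsilon>_def using den by simp
      finally show ?thesis .
    qed
    obtain R1 where R1: "\<And>r. r \<ge> R1 \<Longrightarrow> w r < \<epsilon> \<and> r > 1"
      using eventually_conj[OF Hw[OF epos] eventually_gt_at_top[of 1]]
      unfolding eventually_at_top_linorder by blast
    define F where "F r = r powr \<delta> * (z r - \<epsilon>/\<delta>)" for r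
    define Fd where "Fd r = \<delta> * r powr (\<delta> - 1) * (z r - \<epsilon>/\<delta>) + r powr \<delta> * zd r" for r
    have Fder: "(F has_real_derivative Fd r) (at r)" if r: "r > 0" for r
    proof -
      have "((\<lambda>r. r powr \<delta>) has_real_derivative \<delta> * r powr (\<delta> - 1)) (at r)"
        using DERIV_fun_powr[OF DERIV_ident r, of \<delta>] by simp
      then show ?thesis unfolding F_def[abs_def] Fd_def using r
        by (auto intro!: derivative_eq_intros zder[OF r])
    qed
    have Fd_nonpos: "Fd r \<le> 0" if r: "r \<ge> R1" for r
    proof -
      have r0: "r > 0" using R1[OF r] by simp
      have rp: "r powr \<delta> = r * r powr (\<delta> - 1)" using r0 by (simp add: powr_diff)
      have dd: "\<delta> + 2 - n - m * a r = -(m * (\<alpha>/\<beta> + a r))"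
        unfolding \<delta>_def by (simp add: algebra_simps)
      have "Fd r = r powr (\<delta> - 1) * (w r - \<epsilon> + z r * (\<delta> + 2 - n - m * a r))"
        unfolding Fd_def rp zd_eq[OF r0] using r0 dpos
        by (simp add: field_simps)
      also have "\<dots> = r powr (\<delta> - 1) * (w r - \<epsilon> - m * z r * (\<alpha>/\<beta> + a r))"
        unfolding dd by (simp add: algebra_simps)
      finally have "Fd r = r powr (\<delta> - 1) * (w r - \<epsilon> - m * z r * (\<alpha>/\<beta> + a r))" .
      also have "\<dots> \<le> 0"
      proof -
        have "m * z r * (\<alpha>/\<beta> + a r) > 0" using zpos[OF r0] a_gt[OF r0] m_pos by simp
        then have "w r - \<epsilon> - m * z r * (\<alpha>/\<beta> + a r) < 0" using R1[OF r] by simp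
        then show ?thesis using r0 by (simp add: mult_nonneg_nonpos)
      qed
      finally show ?thesis .
    qed
    have Fder': "(F has_real_derivative Fd x) (at x)" if "x \<ge> R1" for x
    proof -
      have "x > 0" using R1[OF that] by simp
      then show ?thesis by (rule Fder)
    qed
    have Fbound: "F r \<le> F R1" if r: "r \<ge> R1" for r
      by (rule deriv_nonpos_imp_antimono[OF _ _ r, of F Fd])
         (use Fder' Fd_nonpos in auto)
    have lim: "((\<lambda>r. F R1 * r powr (-\<delta>)) \<longlongrightarrow> 0) at_top"
      using tendsto_mult_right_zero[OF tendsto_neg_powr[OF _ filterlim_ident], of "-\<delta>" "F R1"] dpos
      by simp
    have ev2: "eventually (\<lambda>r. F R1 * r powr (-\<delta>) < \<epsilon>/\<delta>) at_top"
      using order_tendstoD(2)[OF lim] epos dpos by simp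
    have ev3: "eventually (\<lambda>r. r \<ge> R1) at_top" by (rule eventually_ge_at_top)
    have ev4: "eventually (\<lambda>r. wd r \<ge> 0 \<and> r \<ge> R1) at_top"
      using eventually_conj[OF ev2 ev3]
    proof (rule eventually_mono)
      fix r assume rr: "F R1 * r powr (-\<delta>) < \<epsilon>/\<delta> \<and> r \<ge> R1"
      have r0: "r > 0" using R1[of r] rr by simp
      have "F r * r powr (-\<delta>) \<le> F R1 * r powr (-\<delta>)" using Fbound[of r] rr by (simp add: mult_right_mono)
      moreover have "F r * r powr (-\<delta>) = z r - \<epsilon>/\<delta>" unfolding F_def using r0
        by (simp add: powr_minus field_simps)
      ultimately have zb: "z r < 2*\<epsilon>/\<delta>" using rr by simp
      have "-(n-1) * a r = (\<alpha> - n*\<beta>) * z r + \<beta> * w r" using ident[OF r0] by simp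
      also have "\<dots> < (\<alpha>-n*\<beta>) * (2*\<epsilon>/\<delta>) + \<beta> * \<epsilon>"
      proof (rule add_strict_mono)
        show "(\<alpha> - n*\<beta>) * z r < (\<alpha>-n*\<beta>) * (2*\<epsilon>/\<delta>)"
          using zb anb' by (rule mult_strict_left_mono[OF _ ]) 
        show "\<beta> * w r < \<beta> * \<epsilon>" using R1[of r] rr bpos by simp
      qed
      also have "\<dots> = (n-1)/(1-m)" using eps_eq by simp
      finally have "-(n-1) * a r < (n-1)/(1-m)" .
      then have "(n-1) * (- a r) < (n-1) * (1/(1-m))" by (simp add: algebra_simps)
      then have "- a r < 1/(1-m)" using mult_less_cancel_left_pos[OF n1] by blast
      then have "(1-m) * a r > -1" using m1 by (simp add: field_simps)
      then have "2 + (1-m) * a r > 0" by simp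
      then show "wd r \<ge> 0 \<and> r \<ge> R1" unfolding wd_def using r0 gr[of r] rr by simp
    qed
    obtain R2 where R2: "\<And>r. r \<ge> R2 \<Longrightarrow> wd r \<ge> 0 \<and> r \<ge> R1"
      using ev4 unfolding eventually_at_top_linorder by blast
    have R2pos: "R2 > 0" using R2[of R2] R1[of R2] by simp
    have wmono: "w R2 \<le> w r" if r: "r \<ge> R2" for r
      by (rule DERIV_nonneg_imp_nondecreasing[OF r])
         (use R2 R2pos wder in \<open>auto intro!: exI[of _ "wd _"]\<close>)
    obtain r where "r \<ge> R2" "w r < w R2"
      using eventually_conj[OF Hw[OF wpos[OF R2pos]] eventually_ge_at_top[of R2]]
      unfolding eventually_at_top_linorder by blast
    then show False using wmono by force
  qed
qed
theorem lemma3p3: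
  fixes v :: "'a::euclidean_space \<Rightarrow> real"
    and m \<rho> \<alpha> \<beta> :: real
  defines "n \<equiv> real DIM('a)"
  assumes dim: "DIM('a) \<ge> 3"
    and m_pos: "0 < m" and m_lt: "m < (n - 2) / n"
    and rho_pos: "\<rho> > 0"
    and alpha_def: "\<alpha> = (2 * \<beta> + \<rho>) / (1 - m)"
    and beta_gt: "\<beta> > m * \<rho> / (n - 2 - m * n)"
    and alpha_gt: "\<alpha> > n * \<beta>"
    and v_pos: "\<forall>x. v x > 0"
    and v_rad: "radially_symmetric v"
    and v_C2: "C2 v"
    and vm_C2: "C2 (\<lambda>x. v x powr m)"
    and eqn: "\<forall>x. (n - 1) / m * laplacian (\<lambda>y. v y powr m) x + \<alpha> * v x
                    + \<beta> * (x \<bullet> grad v x) = 0"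
  shows "\<exists>\<epsilon>. 0 < \<epsilon> \<and> \<epsilon> < min 1
            ((2 * (n - 1) * (n * (1 - m) - 2)) / ((1 - m) * (\<alpha> * (1 - m) - 2 * \<beta>)) / 2) \<and>
          (\<forall>R0 > 1. \<exists>r'. r' > R0 \<and> r'^2 * radval v r' powr (1 - m) \<ge> \<epsilon>)"
proof -
  have eqn': "\<forall>x. (real DIM('a) - 1) / m * laplacian (\<lambda>y. v y powr m) x + \<alpha> * v x
                    + \<beta> * (x \<bullet> grad v x) = 0" using eqn unfolding n_def .
  note R = reduce[OF m_pos v_pos v_rad v_C2 vm_C2 eqn']
  have n3: "n \<ge> 3" unfolding n_def using dim by simp
  have mn: "m * n < n - 2" using m_lt n3 by (simp add: field_simps)
  have m1: "m < 1" using mn n3 m_pos by (smt (verit) mult_le_cancel_right1)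
  have d: "n - 2 - m * n > 0" using mn by simp
  have bpos: "\<beta> > 0"
  proof -
    have "m * \<rho> / (n - 2 - m * n) > 0" using m_pos rho_pos d by simp
    then show ?thesis using beta_gt by simp
  qed
  have apos: "\<alpha> > 0" using alpha_gt bpos n3 by (smt (verit) mult_pos_pos)
  have bk: "\<beta> * (n - 2 - m * n) > m * \<rho>" using beta_gt d by (simp add: field_simps)
  have a1: "\<alpha> * (1 - m) = 2 * \<beta> + \<rho>" unfolding alpha_def using m1 by simp
  have key: "m * \<alpha> < (n - 2) * \<beta>"
  proof -
    have "m * \<alpha> * (1 - m) = m * (2 * \<beta> + \<rho>)" using a1 by simp
    also have "\<dots> < (n - 2) * \<beta> * (1 - m)" using bk by (simp add: algebra_simps)
    finally show ?thesis using m1 by simp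
  qed
  have hdef: "\<forall>r. (\<lambda>r. radval v r powr m) r = radval v r powr m" by simp
  have A: "\<forall>r>0. \<alpha> * radval v r + \<beta> * (r * deriv (radval v) r) > 0"
    by (rule ode_partA[OF m_pos m1 bpos apos key[unfolded n_def] R(1) hdef R(2) R(3) R(4) R(5)])
  obtain \<epsilon> where e: "\<epsilon> > 0" "\<forall>R0. \<exists>r>R0. \<epsilon> \<le> r^2 * radval v r powr (1-m)"
    using ode_partB[OF refl _ m_pos m1 bpos apos key[unfolded n_def] alpha_gt[unfolded n_def] R(1) hdef R(2) R(3) R(4) R(5) A] dim
    by blast
  define M where "M = min 1 ((2 * (n - 1) * (n * (1 - m) - 2)) / ((1 - m) * (\<alpha> * (1 - m) - 2 * \<beta>)) / 2)"
  have Mpos: "M > 0"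
  proof -
    have "n * (1 - m) - 2 > 0" using mn by (simp add: algebra_simps)
    moreover have "\<alpha> * (1 - m) - 2 * \<beta> > 0" using a1 rho_pos by simp
    ultimately show ?thesis unfolding M_def using n3 m1 by simp
  qed
  show ?thesis
  proof (rule exI[of _ "min \<epsilon> M / 2"], intro conjI allI impI)
    show "0 < min \<epsilon> M / 2" using e Mpos by simp
    show "min \<epsilon> M / 2 < min 1 ((2 * (n - 1) * (n * (1 - m) - 2)) / ((1 - m) * (\<alpha> * (1 - m) - 2 * \<beta>)) / 2)"
      using e Mpos unfolding M_def[symmetric] by linarith
    fix R0 :: real assume "R0 > 1"
    obtain r where "r > R0" "\<epsilon> \<le> r^2 * radval v r powr (1-m)" using e(2) by blast
    then show "\<exists>r'>R0. min \<epsilon> M / 2 \<le> r'^2 * radval v r' powr (1-m)"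
      using e Mpos by (intro exI[of _ r]) auto
  qed
qed

end
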